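(* Assume $Q:\Omega\to[0,\infty)$ is Lipschitz with $0<Q_{\min}\le Q\le Q_{\max}$, let $u\in C^{2,\alpha}(\Omega_+\cup\Gamma)$ be as in the standing setting with $(\partial_\nu u)^2=Q^2$ on $\Gamma$. For $\varepsilon>0$ let $U_\varepsilon$ be the intersection of $\Omega$ with the $\varepsilon$-tubular neighborhood of $\Gamma$, and define $$\mu_\varepsilon:=\inf\Big\{\int_{U_\varepsilon\cap\{u>0\}}|\nabla u_\psi|^2\,d\boldsymbol x:\ \psi\in C^1_c(\Gamma),\ \|\psi\|_{L^2(\Gamma)}=1\Big\},$$ where $u_\psi$ solves $\Delta u_\psi=0$ in $U_\varepsilon\cap\{u>0\}$, $u_\psi=Q\psi$ on $\Gamma$, $u_\psi=0$ on $\partial U_\varepsilon\cap\{u>0\}$, with $u_\psi(-1,y)=u_\psi(1,y)$ for all $y$ with $(\pm1,y)\in\overline{U_\varepsilon\cap\{u>0\}}$. Then $\lim_{\varepsilon\to0^+}\mu_\varepsilon=+\infty$.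
   Context: Standing setting: $\Omega=(-1,1)\times(0,\infty)$; $u^*\in C^1([-1,1])$ periodic, $u^*>0$; $\mathcal A=\{v\in L^1_{loc}(\Omega):\nabla v\in L^2,\ v(x,0)=u^*(x),\ v(-1,y)=v(1,y)\}$. $u\in\mathcal A$ with $\Omega_+:=\{u>0\}\cap\Omega$ open, $\Gamma:=\partial\{u>0\}\cap\Omega=\{(x,w(x)):x\in(-1,1)\}$ for a periodic $w\in C^3(\mathbb R)$ with $w>0$ on $[-1,1]$, and $\Delta u=0$ in $\Omega_+$, $u=0$ on $\Gamma$, $u=u^*$ on $\{y=0\}\cap\partial\Omega_+$, $u(-1,y)=u(1,y)$. $\nu=(-w',1)/\sqrt{1+w'^2}$ on $\Gamma$. *)

theory Defs
  imports "HOL-Analysis.Analysis"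
begin

type_synonym pt = "real \<times> real"

definition Omega :: "pt set" where
  "Omega = {p. -1 < fst p \<and> fst p < 1 \<and> 0 < snd p}"

definition px :: "(pt \<Rightarrow> real) \<Rightarrow> pt \<Rightarrow> real" where
  "px f p = deriv (\<lambda>t. f (t, snd p)) (fst p)"
definition py :: "(pt \<Rightarrow> real) \<Rightarrow> pt \<Rightarrow> real" where
  "py f p = deriv (\<lambda>t. f (fst p, t)) (snd p)"

definition laplacian :: "(pt \<Rightarrow> real) \<Rightarrow> pt \<Rightarrow> real" where
  "laplacian f p = px (px f) p + py (py f) p"

definition grad_sq :: "(pt \<Rightarrow> real) \<Rightarrow> pt \<Rightarrow> real" where
  "grad_sq f p = (px f p)\<^sup>2 + (py f p)\<^sup>2"

definition C2_on :: "pt set \<Rightarrow> (pt \<Rightarrow> real) \<Rightarrow> bool" where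
  "C2_on S f \<longleftrightarrow> open S \<and> f differentiable_on S \<and> px f differentiable_on S \<and> py f differentiable_on S
     \<and> continuous_on S (px (px f)) \<and> continuous_on S (px (py f))
     \<and> continuous_on S (py (px f)) \<and> continuous_on S (py (py f))"

definition harmonic_on :: "pt set \<Rightarrow> (pt \<Rightarrow> real) \<Rightarrow> bool" where
  "harmonic_on S f \<longleftrightarrow> C2_on S f \<and> (\<forall>p\<in>S. laplacian f p = 0)"

definition hoelder_on :: "real \<Rightarrow> pt set \<Rightarrow> (pt \<Rightarrow> real) \<Rightarrow> bool" where
  "hoelder_on \<alpha> S f \<longleftrightarrow> (\<exists>C. \<forall>p\<in>S. \<forall>q\<in>S. \<bar>f p - f q\<bar> \<le> C * dist p q powr \<alpha>)"

text \<open>u in C^{2,alpha}(Op \<union> G): C^2 in the open set Op, and u together with its first and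
  second partials is alpha-Hoelder on K \<inter> Op for every compact K \<subseteq> Op \<union> G
  (so all of them extend continuously up to G).\<close>
definition C2alpha_upto :: "real \<Rightarrow> pt set \<Rightarrow> pt set \<Rightarrow> (pt \<Rightarrow> real) \<Rightarrow> bool" where
  "C2alpha_upto \<alpha> Op G u \<longleftrightarrow> C2_on Op u \<and>
     (\<forall>K. compact K \<and> K \<subseteq> Op \<union> G \<longrightarrow>
        (\<forall>f\<in>{u, px u, py u, px (px u), px (py u), py (px u), py (py u)}. hoelder_on \<alpha> (K \<inter> Op) f))"

definition test_fun :: "pt set \<Rightarrow> (pt \<Rightarrow> real) \<Rightarrow> bool" where
  "test_fun S \<phi> \<longleftrightarrow> (\<forall>p. \<phi> differentiable (at p)) \<and> continuous_on UNIV (px \<phi>)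
     \<and> continuous_on UNIV (py \<phi>) \<and> compact (closure {p. \<phi> p \<noteq> 0})
     \<and> closure {p. \<phi> p \<noteq> 0} \<subseteq> S"

text \<open>The admissible class A (traces read pointwise).\<close>
definition admissible :: "(real \<Rightarrow> real) \<Rightarrow> (pt \<Rightarrow> real) \<Rightarrow> bool" where
  "admissible ustar v \<longleftrightarrow>
     v \<in> borel_measurable lebesgue \<and>
     (\<forall>K. compact K \<and> K \<subseteq> Omega \<longrightarrow> set_integrable lebesgue K v) \<and>
     (\<exists>g1 g2. set_integrable lebesgue Omega (\<lambda>p. (g1 p)\<^sup>2) \<and>
              set_integrable lebesgue Omega (\<lambda>p. (g2 p)\<^sup>2) \<and>
              g1 \<in> borel_measurable lebesgue \<and> g2 \<in> borel_measurable lebesgue \<and>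
              (\<forall>\<phi>. test_fun Omega \<phi> \<longrightarrow>
                 (LINT p:Omega|lebesgue. v p * px \<phi> p) = - (LINT p:Omega|lebesgue. g1 p * \<phi> p) \<and>
                 (LINT p:Omega|lebesgue. v p * py \<phi> p) = - (LINT p:Omega|lebesgue. g2 p * \<phi> p))) \<and>
     (\<forall>x. -1 \<le> x \<and> x \<le> 1 \<longrightarrow> v (x, 0) = ustar x) \<and>
     (\<forall>y>0. v (-1, y) = v (1, y))"

definition C3_real :: "(real \<Rightarrow> real) \<Rightarrow> bool" where
  "C3_real f \<longleftrightarrow> (\<forall>k<3. \<forall>x. ((deriv ^^ k) f) differentiable (at x))
     \<and> continuous_on UNIV ((deriv ^^ 3) f)"

definition Gam :: "(real \<Rightarrow> real) \<Rightarrow> pt set" where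
  "Gam w = {(x, w x) | x. -1 < x \<and> x < 1}"

definition dnu :: "(real \<Rightarrow> real) \<Rightarrow> (pt \<Rightarrow> real) \<Rightarrow> real \<Rightarrow> real" where
  "dnu w u x = Lim (at (x, w x) within {p\<in>Omega. u p > 0})
      (\<lambda>q. (px u q * (- deriv w x) + py u q) / sqrt (1 + (deriv w x)\<^sup>2))"

definition Ueps :: "(real \<Rightarrow> real) \<Rightarrow> real \<Rightarrow> pt set" where
  "Ueps w \<epsilon> = Omega \<inter> {p. infdist p (Gam w) < \<epsilon>}"

text \<open>psi in C^1_c(Gamma), through the parametrisation x \<mapsto> (x, w x).\<close>
definition C1c_Gam :: "(real \<Rightarrow> real) \<Rightarrow> (pt \<Rightarrow> real) \<Rightarrow> bool" where
  "C1c_Gam w \<psi> \<longleftrightarrow> (\<lambda>x. \<psi> (x, w x)) C1_differentiable_on {-1<..<1}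
     \<and> closure {x\<in>{-1<..<1}. \<psi> (x, w x) \<noteq> 0} \<subseteq> {-1<..<1}"

text \<open>Squared L^2(Gamma) norm w.r.t. arc length.\<close>
definition L2sq_Gam :: "(real \<Rightarrow> real) \<Rightarrow> (pt \<Rightarrow> real) \<Rightarrow> real" where
  "L2sq_Gam w \<psi> = (LBINT x=-1..1. (\<psi> (x, w x))\<^sup>2 * sqrt (1 + (deriv w x)\<^sup>2))"

definition solves_aux :: "(real \<Rightarrow> real) \<Rightarrow> (pt \<Rightarrow> real) \<Rightarrow> (pt \<Rightarrow> real) \<Rightarrow> real
     \<Rightarrow> (pt \<Rightarrow> real) \<Rightarrow> (pt \<Rightarrow> real) \<Rightarrow> bool" where
  "solves_aux w u Q \<epsilon> \<psi> v \<longleftrightarrow>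
     (let D = Ueps w \<epsilon> \<inter> {p\<in>Omega. u p > 0} in
       harmonic_on D v \<and> continuous_on (closure D) v \<and>
       (\<forall>p\<in>Gam w. v p = Q p * \<psi> p) \<and>
       (\<forall>p\<in>frontier (Ueps w \<epsilon>). u p > 0 \<and> -1 < fst p \<and> fst p < 1 \<longrightarrow> v p = 0) \<and>
       (\<forall>y. (-1, y) \<in> closure D \<or> (1, y) \<in> closure D \<longrightarrow> v (-1, y) = v (1, y)))"

definition mu_eps :: "(real \<Rightarrow> real) \<Rightarrow> (pt \<Rightarrow> real) \<Rightarrow> (pt \<Rightarrow> real) \<Rightarrow> real \<Rightarrow> ennreal" where
  "mu_eps w u Q \<epsilon> =
     (INF \<psi>v \<in> {(\<psi>, v). C1c_Gam w \<psi> \<and> L2sq_Gam w \<psi> = 1 \<and> solves_aux w u Q \<epsilon> \<psi> v}.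
        set_nn_integral lebesgue (Ueps w \<epsilon> \<inter> {p\<in>Omega. u p > 0})
          (\<lambda>p. ennreal (grad_sq (snd \<psi>v) p)))"

end

theory Submission
  imports Defs
begin


lemma seg_real:
  fixes f g :: "real \<Rightarrow> real"
  assumes ab: "a < b" and fc: "continuous_on {a..b} f"
    and fd: "\<And>y. y \<in> {a..b} \<Longrightarrow> (f has_real_derivative g y) (at y)"
    and gc: "continuous_on {a..b} g"
  shows "(f b - f a)\<^sup>2 / (b - a) \<le> integral {a..b} (\<lambda>y. (g y)\<^sup>2)"
proof -
  define l where "l = (f b - f a) / (b - a)"
  have ftc: "(g has_integral f b - f a) {a..b}"
    apply (rule fundamental_theorem_of_calculus)
    using ab apply simp
    using fd by (simp add: has_real_derivative_iff_has_vector_derivative[symmetric] has_field_derivative_at_within)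
  have i1: "((\<lambda>y. 2 * l * g y - l\<^sup>2) has_integral (2 * l * (f b - f a) - l\<^sup>2 * (b - a))) {a..b}"
  proof -
    have "((\<lambda>y. 2 * l * g y) has_integral 2 * l * (f b - f a)) {a..b}"
      using has_integral_mult_right[OF ftc] by simp
    moreover have "((\<lambda>y. l\<^sup>2) has_integral l\<^sup>2 * (b - a)) {a..b}"
      using has_integral_const_real[of "l^2" a b] ab by (simp add: mult.commute)
    ultimately show ?thesis using has_integral_diff by blast
  qed
  have i2: "((\<lambda>y. (g y)\<^sup>2) has_integral integral {a..b} (\<lambda>y. (g y)\<^sup>2)) {a..b}"
    by (intro integrable_integral integrable_continuous_interval continuous_intros gc)
  have "2 * l * (f b - f a) - l\<^sup>2 * (b - a) \<le> integral {a..b} (\<lambda>y. (g y)\<^sup>2)"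
  proof (rule has_integral_le[OF i1 i2])
    fix y show "2 * l * g y - l\<^sup>2 \<le> (g y)\<^sup>2"
      using sum_power2_ge_zero[of "g y - l" 0] by (simp add: power2_eq_square algebra_simps)
  qed
  moreover have "2 * l * (f b - f a) - l\<^sup>2 * (b - a) = (f b - f a)\<^sup>2 / (b - a)"
  proof -
    have gen: "\<And>D d::real. d \<noteq> 0 \<Longrightarrow> 2 * (D/d) * D - (D/d)\<^sup>2 * d = D\<^sup>2 / d"
      by (simp add: power2_eq_square field_simps)
    show ?thesis unfolding l_def by (rule gen) (use ab in simp)
  qed
  ultimately show ?thesis by simp
qed


lemma seg_nn:
  fixes f g :: "real \<Rightarrow> real"
  assumes lh: "lo < hi" and fc: "continuous_on {lo..hi} f"
    and fd: "\<And>y. y \<in> {lo<..<hi} \<Longrightarrow> (f has_real_derivative g y) (at y)"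
    and gc: "continuous_on {lo<..<hi} g"
  shows "ennreal ((f hi - f lo)\<^sup>2 / (hi - lo)) \<le> (\<integral>\<^sup>+y. ennreal (indicator {lo<..<hi} y * (g y)\<^sup>2) \<partial>lborel)"
    (is "_ \<le> ?I")
proof -
  have key: "ennreal ((f b - f a)\<^sup>2 / (hi - lo)) \<le> ?I" if ab: "lo < a" "a < b" "b < hi" for a b
  proof -
    have sub: "{a..b} \<subseteq> {lo<..<hi}" using ab by auto
    have r1: "(f b - f a)\<^sup>2 / (hi - lo) \<le> (f b - f a)\<^sup>2 / (b - a)"
      using ab by (intro divide_left_mono) auto
    have r2: "(f b - f a)\<^sup>2 / (b - a) \<le> integral {a..b} (\<lambda>y. (g y)\<^sup>2)"
    proof (rule seg_real)
      show "continuous_on {a..b} f" using ab by (intro continuous_on_subset[OF fc]) auto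
      show "continuous_on {a..b} g" using gc sub by (rule continuous_on_subset)
      show "\<And>y. y \<in> {a..b} \<Longrightarrow> (f has_real_derivative g y) (at y)" using fd sub by blast
    qed (use ab in auto)
    have hi: "((\<lambda>y. (g y)\<^sup>2) has_integral integral {a..b} (\<lambda>y. (g y)\<^sup>2)) {a..b}"
      by (intro integrable_integral integrable_continuous_interval continuous_intros)
         (rule continuous_on_subset[OF gc sub])
    have e: "(\<integral>\<^sup>+y. ennreal (indicator {a..b} y * (g y)\<^sup>2) \<partial>lborel) = ennreal (integral {a..b} (\<lambda>y. (g y)\<^sup>2))"
      using nn_integral_has_integral_lebesgue[OF _ hi] by simp
    have m: "(\<integral>\<^sup>+y. ennreal (indicator {a..b} y * (g y)\<^sup>2) \<partial>lborel) \<le> ?I"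
      by (intro nn_integral_mono ennreal_leI) (use sub in \<open>auto simp: indicator_def\<close>)
    show ?thesis using r1 r2 e m
      by (metis (no_types, lifting) ennreal_leI order_trans)
  qed
  show ?thesis
  proof (cases "?I = top")
    case True then show ?thesis by simp
  next
    case False
    then obtain R where R: "?I = ennreal R" "0 \<le> R"
      using ennreal_cases[of ?I] by auto
    define F where "F a b = (f b - f a)\<^sup>2 / (hi - lo)" for a b
    have kr: "F a b \<le> R" if "lo < a" "a < b" "b < hi" for a b
      using key[OF that] R unfolding F_def
      by (metis ennreal_le_iff)
    have contf: "(f \<longlongrightarrow> f x) (at x within S)" if "x \<in> {lo..hi}" "S \<subseteq> {lo..hi}" for x S
      using fc that unfolding continuous_on_def by (meson tendsto_within_subset)
    have k2: "F lo b \<le> R" if b: "lo < b" "b < hi" for b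
    proof (rule tendsto_le[of "at lo within {lo<..<b}"])
      show "at lo within {lo<..<b} \<noteq> bot" using b by (simp add: at_within_eq_bot_iff)
      show "((\<lambda>_. R) \<longlongrightarrow> R) (at lo within {lo<..<b})" by simp
      show "((\<lambda>a. F a b) \<longlongrightarrow> F lo b) (at lo within {lo<..<b})"
        unfolding F_def using b lh
        by (intro tendsto_intros contf) auto
      show "\<forall>\<^sub>F a in at lo within {lo<..<b}. F a b \<le> R"
        using b by (auto simp: eventually_at_filter intro!: always_eventually kr)
    qed
    have k3: "F lo hi \<le> R"
    proof (rule tendsto_le[of "at hi within {lo<..<hi}"])
      show "at hi within {lo<..<hi} \<noteq> bot" using lh by (simp add: at_within_eq_bot_iff)
      show "((\<lambda>_. R) \<longlongrightarrow> R) (at hi within {lo<..<hi})" by simp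
      show "((\<lambda>b. F lo b) \<longlongrightarrow> F lo hi) (at hi within {lo<..<hi})"
        unfolding F_def using lh
        by (intro tendsto_intros contf) auto
      show "\<forall>\<^sub>F b in at hi within {lo<..<hi}. F lo b \<le> R"
        by (auto simp: eventually_at_filter intro!: always_eventually k2)
    qed
    then show ?thesis using R unfolding F_def by (simp add: ennreal_leI)
  qed
qed


lemma wfacts:
  assumes "C3_real w"
  shows "\<And>x. w differentiable (at x)" "continuous_on UNIV (deriv w)" "continuous_on UNIV w"
proof -
  have d: "\<forall>k<3. \<forall>x. ((deriv ^^ k) w) differentiable (at x)" using assms unfolding C3_real_def by blast
  show d0: "\<And>x. w differentiable (at x)" using d[rule_format, of 0] by simp
  have "\<And>x. (deriv w) differentiable (at x)" using d[rule_format, of 1] by simp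
  then show "continuous_on UNIV (deriv w)"
    by (simp add: continuous_at_imp_continuous_on differentiable_imp_continuous_within)
  show "continuous_on UNIV w" using d0
    by (simp add: continuous_at_imp_continuous_on differentiable_imp_continuous_within)
qed

lemma wlip:
  assumes "C3_real w"
  shows "\<exists>B>0. (\<forall>x\<in>{-1..1}. \<bar>deriv w x\<bar> \<le> B) \<and>
           (\<forall>x\<in>{-1..1}. \<forall>x'\<in>{-1..1}. \<bar>w x - w x'\<bar> \<le> B * \<bar>x - x'\<bar>)"
proof -
  note wf = wfacts[OF assms]
  have "compact (deriv w ` {-1..1::real})"
    by (rule compact_continuous_image) (auto intro: continuous_on_subset[OF wf(2)])
  then obtain B where B: "B > 0" "\<forall>y\<in>deriv w ` {-1..1}. norm y \<le> B"
    using compact_imp_bounded bounded_pos by metis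
  have Bd: "\<bar>deriv w x\<bar> \<le> B" if "x \<in> {-1..1}" for x using B that by auto
  have der: "DERIV w t :> deriv w t" for t using wf(1) DERIV_deriv_iff_real_differentiable by blast
  have lip: "\<bar>w x - w x'\<bar> \<le> B * \<bar>x - x'\<bar>" if "x \<in> {-1..1}" "x' \<in> {-1..1}" for x x'
  proof -
    have *: "\<bar>w b - w a\<bar> \<le> B * (b - a)" if "a < b" "a \<in> {-1..1}" "b \<in> {-1..1}" for a b
    proof -
      obtain z where z: "a < z" "z < b" "w b - w a = (b - a) * deriv w z"
        using MVT2[OF \<open>a < b\<close> der] by blast
      have "\<bar>deriv w z\<bar> \<le> B" using Bd z that by auto
      then show ?thesis using z(3) that(1) by (simp add: abs_mult mult.commute mult_right_mono)
    qed
    consider "x < x'" | "x' < x" | "x = x'" by linarith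
    then show ?thesis
    proof cases
      case 1 then show ?thesis using *[of x x'] that by (simp add: abs_minus_commute)
    next
      case 2 then show ?thesis using *[of x' x] that by simp
    qed simp
  qed
  show ?thesis using B(1) Bd lip by blast
qed

lemma infdist_low:
  fixes w :: "real \<Rightarrow> real"
  assumes B: "B \<ge> 0" and lip: "\<forall>x\<in>{-1..1}. \<forall>x'\<in>{-1..1}. \<bar>w x - w x'\<bar> \<le> B * \<bar>x - x'\<bar>"
    and x: "x \<in> {-1..1}" and sg: "\<bar>\<sigma>\<bar> = 1" and s: "s \<ge> 0"
  shows "s / (2 * (B + 1)) \<le> infdist (x, w x + \<sigma> * s) (Gam w)"
proof -
  define C where "C = 2 * (B + 1)"
  have C: "C > 0" "C \<ge> 2" "B / C \<le> 1/2" using B by (auto simp: C_def field_simps)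
  have ne: "Gam w \<noteq> {}" unfolding Gam_def by (auto intro: exI[of _ 0])
  have "s / C \<le> dist (x, w x + \<sigma> * s) q" if q: "q \<in> Gam w" for q
  proof -
    obtain x' where x': "q = (x', w x')" "-1 < x'" "x' < 1" using q unfolding Gam_def by auto
    have d1: "\<bar>x - x'\<bar> \<le> dist (x, w x + \<sigma> * s) q"
      unfolding x'(1) dist_Pair_Pair dist_real_def
      by (rule real_le_rsqrt) simp
    have d2: "\<bar>w x + \<sigma> * s - w x'\<bar> \<le> dist (x, w x + \<sigma> * s) q"
      unfolding x'(1) dist_Pair_Pair dist_real_def
      by (rule real_le_rsqrt) simp
    show ?thesis
    proof (cases "\<bar>x - x'\<bar> \<ge> s / C")
      case True then show ?thesis using d1 by linarith
    next
      case False
      have "\<bar>w x - w x'\<bar> \<le> B * \<bar>x - x'\<bar>" using lip x x' by auto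
      also have "\<dots> \<le> B * (s / C)" using False B by (intro mult_left_mono) auto
      also have "\<dots> = (B / C) * s" by simp
      also have "\<dots> \<le> (1/2) * s" using C(3) s by (intro mult_right_mono) auto
      finally have a: "\<bar>w x - w x'\<bar> \<le> s / 2" by simp
      have "\<bar>\<sigma> * s\<bar> = s" using sg s by (simp add: abs_mult)
      then have "s / 2 \<le> \<bar>w x + \<sigma> * s - w x'\<bar>" using a by linarith
      moreover have "s / C \<le> s / 2" using C s by (intro divide_left_mono) auto
      ultimately show ?thesis using d2 by linarith
    qed
  qed
  then show ?thesis unfolding C_def[symmetric] infdist_notempty[OF ne]
    by (intro cINF_greatest ne) auto
qed

lemma exit_point:
  fixes F :: "real \<Rightarrow> real"
  assumes Fc: "continuous_on UNIV F" and F0: "F 0 < \<epsilon>" and low: "\<And>s. s \<ge> 0 \<Longrightarrow> s / C \<le> F s"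
    and C: "C > 0" and e: "\<epsilon> > 0"
  shows "\<exists>t. 0 < t \<and> t \<le> C * \<epsilon> \<and> \<epsilon> \<le> F t \<and> (\<forall>s. 0 \<le> s \<and> s < t \<longrightarrow> F s < \<epsilon>)"
proof -
  define T where "T = {0..C*\<epsilon>} \<inter> {s. \<epsilon> \<le> F s}"
  have cl: "closed T" unfolding T_def
    by (intro closed_Int closed_atLeastAtMost closed_Collect_le continuous_on_const Fc)
  have mem: "C * \<epsilon> \<in> T" unfolding T_def using low[of "C*\<epsilon>"] C e by (auto simp: field_simps)
  have bb: "bdd_below T" unfolding T_def by (rule bdd_belowI[of _ 0]) auto
  define t where "t = Inf T"
  have tT: "t \<in> T" unfolding t_def using closed_contains_Inf[OF _ bb cl] mem by blast
  have lt: "F s < \<epsilon>" if "0 \<le> s" "s < t" for s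
  proof (rule ccontr)
    assume "\<not> F s < \<epsilon>"
    then have "s \<in> T" using that tT unfolding T_def by auto
    then have "t \<le> s" unfolding t_def using bb by (simp add: cInf_lower)
    then show False using that by simp
  qed
  have "t \<noteq> 0" using tT F0 unfolding T_def by auto
  then have "0 < t" using tT unfolding T_def by auto
  then show ?thesis using tT lt unfolding T_def by auto
qed



lemma clopen_pre:
  fixes g :: "'a::topological_space \<Rightarrow> pt" and Pos G :: "pt set"
  assumes conn: "connected S" and gc: "continuous_on S g"
    and img: "\<And>z. z \<in> S \<Longrightarrow> g z \<notin> G" and gO: "\<And>z. z \<in> S \<Longrightarrow> g z \<in> Omega"
    and Po: "open Pos" and fr: "frontier Pos \<inter> Omega = G"
  shows "S \<inter> g -` Pos = {} \<or> S \<inter> g -` Pos = S"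
proof -
  have o: "openin (top_of_set S) (S \<inter> g -` Pos)"
    by (rule continuous_openin_preimage_gen[OF gc Po])
  have c0: "closedin (top_of_set S) (S \<inter> g -` closure Pos)"
    by (rule continuous_closedin_preimage_gen[OF gc, of UNIV]) (auto simp: closed_closure)
  have cl: "g z \<in> Pos" if z: "z \<in> S" "g z \<in> closure Pos" for z
  proof (rule ccontr)
    assume "g z \<notin> Pos"
    then have "g z \<in> frontier Pos" using z closure_Un_frontier by blast
    then have "g z \<in> G" using fr gO[OF z(1)] by blast
    then show False using img z(1) by blast
  qed
  have "S \<inter> g -` closure Pos = S \<inter> g -` Pos"
    using cl closure_subset by blast
  with c0 have c: "closedin (top_of_set S) (S \<inter> g -` Pos)" by simp
  show ?thesis using conn o c unfolding connected_clopen by blast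
qed

lemma sign_choice:
  fixes w :: "real \<Rightarrow> real" and Pos :: "pt set"
  assumes wc: "continuous_on UNIV w" and wpos: "\<forall>x\<in>{-1..1}. w x > 0"
    and Po: "open Pos" and PO: "Pos \<subseteq> Omega"
    and fr: "frontier Pos \<inter> Omega = Gam w" and PG: "Pos \<inter> Gam w = {}"
  shows "\<exists>\<sigma>::real. (\<sigma> = 1 \<or> \<sigma> = -1) \<and>
     (\<forall>x\<in>{-1<..<1}. \<forall>s>0. (\<sigma> = -1 \<longrightarrow> s < w x) \<longrightarrow> (x, w x + \<sigma> * s) \<in> Pos)"
proof -
  define Pp :: "pt set" where "Pp = {-1<..<1} \<times> {0<..}"
  define Pm :: "pt set" where "Pm = {-1<..<1} \<times> {0<..<1}"
  define gp where "gp = (\<lambda>z::pt. (fst z, w (fst z) + snd z))"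
  define gm where "gm = (\<lambda>z::pt. (fst z, snd z * w (fst z)))"
  have wp: "w x > 0" if "x \<in> {-1<..<1}" for x using wpos that by auto
  have cPp: "connected Pp" unfolding Pp_def
    by (intro convex_connected convex_Times) (auto simp: convex_real_interval)
  have cPm: "connected Pm" unfolding Pm_def
    by (intro convex_connected convex_Times) (auto simp: convex_real_interval)
  have wc': "continuous_on S (\<lambda>z. w (fst z))" for S :: "pt set"
    by (rule continuous_on_compose2[OF wc]) (auto intro: continuous_intros)
  have gpc: "continuous_on Pp gp" unfolding gp_def
    by (intro continuous_intros wc')
  have gmc: "continuous_on Pm gm" unfolding gm_def
    by (intro continuous_intros wc')
  have GamD: "y = w x" if "(x, y) \<in> Gam w" for x y using that unfolding Gam_def by auto
  have dp: "Pp \<inter> gp -` Pos = {} \<or> Pp \<inter> gp -` Pos = Pp"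
  proof (rule clopen_pre[OF cPp gpc _ _ Po fr])
    fix z assume z: "z \<in> Pp"
    then show "gp z \<notin> Gam w" unfolding gp_def Pp_def using GamD
      by (cases z) (auto dest!: GamD)
    show "gp z \<in> Omega" using z wp unfolding gp_def Pp_def Omega_def
      by (cases z) (auto intro: add_pos_pos)
  qed
  have dm: "Pm \<inter> gm -` Pos = {} \<or> Pm \<inter> gm -` Pos = Pm"
  proof (rule clopen_pre[OF cPm gmc _ _ Po fr])
    fix z assume z: "z \<in> Pm"
    then show "gm z \<notin> Gam w" unfolding gm_def Pm_def using wp
      by (cases z) (force dest!: GamD)
    show "gm z \<in> Omega" using z wp unfolding gm_def Pm_def Omega_def
      by (cases z) (auto)
  qed
  show ?thesis
  proof (cases "Pp \<inter> gp -` Pos = Pp")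
    case True
    show ?thesis
    proof (intro exI[of _ 1] conjI ballI allI impI)
      fix x s :: real assume "x \<in> {-1<..<1}" "0 < s"
      then have "(x, s) \<in> Pp" unfolding Pp_def by auto
      then have "gp (x, s) \<in> Pos" using True by blast
      then show "(x, w x + 1 * s) \<in> Pos" unfolding gp_def by simp
    qed simp
  next
    case F1: False
    show ?thesis
    proof (cases "Pm \<inter> gm -` Pos = Pm")
      case True
      show ?thesis
      proof (intro exI[of _ "-1"] conjI ballI allI impI)
        fix x s :: real assume x: "x \<in> {-1<..<1}" "0 < s" "-1 = (-1::real) \<longrightarrow> s < w x"
        have wx: "w x > 0" using wp x by auto
        have "(x, 1 - s / w x) \<in> Pm" unfolding Pm_def using x wx by (auto simp: field_simps)
        then have "gm (x, 1 - s / w x) \<in> Pos" using True by blast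
        moreover have "gm (x, 1 - s / w x) = (x, w x + -1 * s)" unfolding gm_def using wx
          by (simp add: field_simps)
        ultimately show "(x, w x + -1 * s) \<in> Pos" by simp
      qed simp
    next
      case F2: False
      have ep: "Pp \<inter> gp -` Pos = {}" using dp F1 by blast
      have em: "Pm \<inter> gm -` Pos = {}" using dm F2 by blast
      have "Pos = {}"
      proof (rule ccontr)
        assume "Pos \<noteq> {}"
        then obtain x y where p: "(x, y) \<in> Pos" by auto
        then have xy: "-1 < x" "x < 1" "0 < y" using PO unfolding Omega_def by auto
        have wx: "w x > 0" using wp xy by auto
        consider "y > w x" | "y < w x" | "y = w x" by linarith
        then show False
        proof cases
          case 1
          then have "(x, y - w x) \<in> Pp \<inter> gp -` Pos" unfolding Pp_def gp_def using xy p by auto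
          then show False using ep by blast
        next
          case 2
          then have "(x, y / w x) \<in> Pm \<inter> gm -` Pos" unfolding Pm_def gm_def using xy p wx
            by (auto simp: field_simps)
          then show False using em by blast
        next
          case 3
          then have "(x, y) \<in> Gam w" unfolding Gam_def using xy by auto
          then show False using PG p by blast
        qed
      qed
      moreover have "(0, w 0) \<in> Gam w" unfolding Gam_def by auto
      ultimately show ?thesis using fr by auto
    qed
  qed
qed



lemma open_Omega: "open Omega"
  unfolding Omega_def
  by (intro open_Collect_conj open_Collect_less continuous_intros)

lemma open_Ueps: "open (Ueps w e)"
  unfolding Ueps_def
  by (intro open_Int open_Omega open_Collect_less continuous_intros)

lemma inner_bound:
  fixes w :: "real \<Rightarrow> real" and u Q \<psi> v :: "pt \<Rightarrow> real" and \<epsilon> \<sigma> x C :: real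
  defines "D \<equiv> Ueps w \<epsilon> \<inter> {p\<in>Omega. u p > 0}"
  assumes sol: "solves_aux w u Q \<epsilon> \<psi> v"
    and sg: "\<sigma> = 1 \<or> \<sigma> = -1"
    and sprop: "\<forall>s>0. (\<sigma> = -1 \<longrightarrow> s < w x) \<longrightarrow> (x, w x + \<sigma> * s) \<in> {p\<in>Omega. u p > 0}"
    and x: "x \<in> {-1<..<1}" and e: "\<epsilon> > 0" and C: "C > 0"
    and low: "\<And>s. s \<ge> 0 \<Longrightarrow> s / C \<le> infdist (x, w x + \<sigma> * s) (Gam w)"
    and small: "C * \<epsilon> < w x"
  shows "ennreal ((Q (x, w x) * \<psi> (x, w x))\<^sup>2 / (C * \<epsilon>))
     \<le> (\<integral>\<^sup>+y. ennreal (indicator D (x, y) * (py v (x, y))\<^sup>2) \<partial>lborel)"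
proof -
  have harm: "harmonic_on D v" and contcl: "continuous_on (closure D) v"
    and gamv: "\<forall>p\<in>Gam w. v p = Q p * \<psi> p"
    and frv: "\<forall>p\<in>frontier (Ueps w \<epsilon>). u p > 0 \<and> -1 < fst p \<and> fst p < 1 \<longrightarrow> v p = 0"
    using sol unfolding solves_aux_def D_def Let_def by auto
  have oD: "open D" and vd: "v differentiable_on D" and pyd: "py v differentiable_on D"
    using harm unfolding harmonic_on_def C2_on_def by auto
  have xG: "(x, w x) \<in> Gam w" using x unfolding Gam_def by auto
  define F where "F s = infdist (x, w x + \<sigma> * s) (Gam w)" for s
  have Fc: "continuous_on UNIV F" unfolding F_def by (intro continuous_intros)
  have F0: "F 0 < \<epsilon>" unfolding F_def using xG e by simp
  obtain t where t: "0 < t" "t \<le> C * \<epsilon>" "\<epsilon> \<le> F t" "\<forall>s. 0 \<le> s \<and> s < t \<longrightarrow> F s < \<epsilon>"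
    using exit_point[OF Fc F0 _ C e] low unfolding F_def by blast
  have inPos: "(x, w x + \<sigma> * s) \<in> {p\<in>Omega. u p > 0}" if "0 < s" "s \<le> t" for s
    using sprop that t small by auto
  have inD: "(x, w x + \<sigma> * s) \<in> D" if "0 < s" "s < t" for s
    using inPos[of s] that t(4) unfolding D_def Ueps_def F_def by auto
  define lo where "lo = min (w x) (w x + \<sigma> * t)"
  define hi where "hi = max (w x) (w x + \<sigma> * t)"
  have hl: "hi - lo = t" using sg t(1) unfolding lo_def hi_def by auto
  have lh: "lo < hi" using hl t(1) by simp
  have ends: "{lo, hi} = {w x, w x + \<sigma> * t}" unfolding lo_def hi_def by auto
  have segD: "(x, y) \<in> D" if "y \<in> {lo<..<hi}" for y
  proof -
    have "\<exists>s. 0 < s \<and> s < t \<and> y = w x + \<sigma> * s"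
      using sg that unfolding lo_def hi_def
    proof (elim disjE)
      assume "\<sigma> = 1" then show ?thesis using that unfolding lo_def hi_def
        using t(1) by (intro exI[of _ "y - w x"]) (auto simp: min_def max_def)
    next
      assume "\<sigma> = -1" then show ?thesis using that unfolding lo_def hi_def
        using t(1) by (intro exI[of _ "w x - y"]) (auto simp: min_def max_def)
    qed
    then show ?thesis using inD by auto
  qed
  have clos: "(\<lambda>y. (x, y)) ` {lo..hi} \<subseteq> closure D"
  proof -
    have "(\<lambda>y. (x, y)) ` closure {lo<..<hi} \<subseteq> closure D"
      by (rule image_closure_subset) (use segD closure_subset in \<open>force intro!: continuous_intros\<close>)+
    then show ?thesis using lh by simp
  qed
  define f where "f y = v (x, y)" for y
  define g where "g y = py v (x, y)" for y
  have fc: "continuous_on {lo..hi} f" unfolding f_def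
    by (rule continuous_on_compose2[OF contcl _ clos]) (auto intro!: continuous_intros)
  have fd: "(f has_real_derivative g y) (at y)" if "y \<in> {lo<..<hi}" for y
  proof -
    have "v differentiable at (x, y)"
      using vd oD segD[OF that] differentiable_on_eq_differentiable_at by blast
    then have "(\<lambda>t. v (x, t)) differentiable at y"
      using differentiable_chain_at[of "\<lambda>t. (x, t)" y v]
      by (auto simp: o_def intro!: derivative_intros)
    then show ?thesis unfolding f_def g_def py_def
      using DERIV_deriv_iff_real_differentiable by fastforce
  qed
  have gc: "continuous_on {lo<..<hi} g" unfolding g_def
    by (rule continuous_on_compose2[OF differentiable_imp_continuous_on[OF pyd]])
       (use segD in \<open>auto intro!: continuous_intros\<close>)
  have main: "ennreal ((f hi - f lo)\<^sup>2 / (hi - lo)) \<le> (\<integral>\<^sup>+y. ennreal (indicator {lo<..<hi} y * (g y)\<^sup>2) \<partial>lborel)"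
    by (rule seg_nn[OF lh fc fd gc])
  have mono: "(\<integral>\<^sup>+y. ennreal (indicator {lo<..<hi} y * (g y)\<^sup>2) \<partial>lborel)
      \<le> (\<integral>\<^sup>+y. ennreal (indicator D (x, y) * (py v (x, y))\<^sup>2) \<partial>lborel)"
    by (intro nn_integral_mono ennreal_leI) (use segD in \<open>auto simp: indicator_def g_def\<close>)
  define pst where "pst = (x, w x + \<sigma> * t)"
  have "w x + \<sigma> * t \<in> {lo..hi}" unfolding lo_def hi_def by auto
  then have pcl: "pst \<in> closure D" using clos unfolding pst_def by blast
  have pfr: "pst \<in> frontier (Ueps w \<epsilon>)"
  proof -
    have "pst \<in> closure (Ueps w \<epsilon>)" using pcl closure_mono[of D "Ueps w \<epsilon>"] unfolding D_def by auto
    moreover have "pst \<notin> Ueps w \<epsilon>" using t(3) unfolding pst_def Ueps_def F_def by auto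
    ultimately show ?thesis unfolding frontier_def using interior_open[OF open_Ueps] by auto
  qed
  have v0: "v pst = 0" using frv pfr inPos[of t] t(1) x unfolding pst_def by auto
  have vG: "v (x, w x) = Q (x, w x) * \<psi> (x, w x)" using gamv xG by auto
  have sq: "(f hi - f lo)\<^sup>2 = (Q (x, w x) * \<psi> (x, w x))\<^sup>2"
  proof -
    have "(f lo = v (x, w x) \<and> f hi = v pst) \<or> (f lo = v pst \<and> f hi = v (x, w x))"
      unfolding f_def pst_def lo_def hi_def by (auto simp: min_def max_def)
    then show ?thesis using v0 vG by (auto simp: power2_eq_square)
  qed
  have le: "(Q (x, w x) * \<psi> (x, w x))\<^sup>2 / (C * \<epsilon>) \<le> (Q (x, w x) * \<psi> (x, w x))\<^sup>2 / t"
    using t by (intro divide_left_mono) auto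
  show ?thesis using main mono le sq hl
    by (metis (no_types, lifting) ennreal_leI order_trans)
qed



lemma L2_int:
  assumes "L2sq_Gam w \<psi> = 1"
  shows "(\<integral>\<^sup>+x. ennreal (indicator {-1<..<1} x * ((\<psi> (x, w x))\<^sup>2 * sqrt (1 + (deriv w x)\<^sup>2))) \<partial>lborel) = 1"
proof -
  define F where "F x = indicator {-1<..<1::real} x * ((\<psi> (x, w x))\<^sup>2 * sqrt (1 + (deriv w x)\<^sup>2))" for x
  have ei: "einterval (-1) 1 = {-1<..<1::real}" 
  proof -
    have "(- 1 :: ereal) = ereal (-1)" by (simp add: one_ereal_def)
    then show ?thesis using einterval_eq_Icc[of "-1" 1] by (simp add: one_ereal_def)
  qed
  have I1: "integral\<^sup>L lborel F = 1"
  proof -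
    have le: "(-1::ereal) \<le> 1" by (simp add: one_ereal_def)
    have "(LBINT x:einterval (-1) 1. (\<psi> (x, w x))\<^sup>2 * sqrt (1 + (deriv w x)\<^sup>2)) = 1"
      using assms unfolding L2sq_Gam_def interval_lebesgue_integral_def using le
      by (simp only: if_True)
    then show ?thesis unfolding ei F_def set_lebesgue_integral_def by simp
  qed
  then have "integrable lborel F" using not_integrable_integral_eq by fastforce
  moreover have "AE x in lborel. 0 \<le> F x" unfolding F_def by (auto simp: indicator_def)
  ultimately have "(\<integral>\<^sup>+x. ennreal (F x) \<partial>lborel) = ennreal (integral\<^sup>L lborel F)"
    by (rule nn_integral_eq_integral)
  then show ?thesis using I1 unfolding F_def by simp
qed

lemma L2_meas:
  assumes "L2sq_Gam w \<psi> = 1"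
  shows "(\<lambda>x. ennreal (indicator {-1<..<1::real} x * ((\<psi> (x, w x))\<^sup>2 * sqrt (1 + (deriv w x)\<^sup>2)))) \<in> borel_measurable lborel"
proof -
  define F where "F x = indicator {-1<..<1::real} x * ((\<psi> (x, w x))\<^sup>2 * sqrt (1 + (deriv w x)\<^sup>2))" for x
  have ei: "einterval (-1) 1 = {-1<..<1::real}"
  proof -
    have "(- 1 :: ereal) = ereal (-1)" by (simp add: one_ereal_def)
    then show ?thesis using einterval_eq_Icc[of "-1" 1] by (simp add: one_ereal_def)
  qed
  have I1: "integral\<^sup>L lborel F = 1"
  proof -
    have le: "(-1::ereal) \<le> 1" by (simp add: one_ereal_def)
    have "(LBINT x:einterval (-1) 1. (\<psi> (x, w x))\<^sup>2 * sqrt (1 + (deriv w x)\<^sup>2)) = 1"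
      using assms unfolding L2sq_Gam_def interval_lebesgue_integral_def using le
      by (simp only: if_True)
    then show ?thesis unfolding ei F_def set_lebesgue_integral_def by simp
  qed
  then have "integrable lborel F" using not_integrable_integral_eq by fastforce
  then have "F \<in> borel_measurable lborel" by (rule borel_measurable_integrable)
  then show ?thesis unfolding F_def by simp
qed



lemma meas_h:
  assumes oD: "open D" and c: "continuous_on D g"
  shows "(\<lambda>p::pt. ennreal (indicator D p * (g p)\<^sup>2)) \<in> borel_measurable (lborel \<Otimes>\<^sub>M lborel)"
proof -
  have "(\<lambda>p::pt. indicator D p *\<^sub>R (g p)\<^sup>2) \<in> borel_measurable borel"
    by (rule borel_measurable_continuous_on_indicator) (use oD c in \<open>auto intro!: continuous_intros\<close>)
  then have "(\<lambda>p::pt. ennreal (indicator D p * (g p)\<^sup>2)) \<in> borel_measurable borel" by simp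
  then show ?thesis unfolding lborel_prod by simp
qed

theorem lemma5p2:
  fixes ustar w :: "real \<Rightarrow> real" and u Q :: "pt \<Rightarrow> real" and Qmin Qmax \<alpha> :: real
  assumes ustar_C1: "ustar C1_differentiable_on UNIV"
    and ustar_per: "\<forall>x. ustar (x + 2) = ustar x"
    and ustar_pos: "\<forall>x. ustar x > 0"
    and w_C3: "C3_real w"
    and w_per: "\<forall>x. w (x + 2) = w x"
    and w_pos: "\<forall>x\<in>{-1..1}. w x > 0"
    and u_adm: "admissible ustar u"
    and Op_open: "open {p\<in>Omega. u p > 0}"
    and Gam_eq: "frontier {p\<in>Omega. u p > 0} \<inter> Omega = Gam w"
    and u_harm: "harmonic_on {p\<in>Omega. u p > 0} u"
    and u_Gam: "\<forall>p\<in>Gam w. u p = 0"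
    and u_bottom: "\<forall>p\<in>frontier {p\<in>Omega. u p > 0}. snd p = 0 \<longrightarrow> u p = ustar (fst p)"
    and u_per: "\<forall>y>0. u (-1, y) = u (1, y)"
    and alpha: "0 < \<alpha>" "\<alpha> < 1"
    and u_reg: "C2alpha_upto \<alpha> {p\<in>Omega. u p > 0} (Gam w) u"
    and Q_lip: "\<exists>L. L-lipschitz_on Omega Q"
    and Q_nonneg: "\<forall>p\<in>Omega. Q p \<ge> 0"
    and Q_bounds: "0 < Qmin" "\<forall>p\<in>Omega. Qmin \<le> Q p \<and> Q p \<le> Qmax"
    and free_bdry: "\<forall>x\<in>{-1<..<1}. (dnu w u x)\<^sup>2 = (Q (x, w x))\<^sup>2"
  shows "((\<lambda>\<epsilon>. mu_eps w u Q \<epsilon>) \<longlongrightarrow> top) (at_right 0)"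
proof -
  define Pos where "Pos = {p\<in>Omega. u p > 0}"
  note wf = wfacts[OF w_C3]
  obtain B where B: "B > 0" "\<forall>x\<in>{-1..1}. \<bar>deriv w x\<bar> \<le> B"
    "\<forall>x\<in>{-1..1}. \<forall>x'\<in>{-1..1}. \<bar>w x - w x'\<bar> \<le> B * \<bar>x - x'\<bar>"
    using wlip[OF w_C3] by blast
  have PG: "Pos \<inter> Gam w = {}" using u_Gam unfolding Pos_def by auto
  have PO: "Pos \<subseteq> Omega" unfolding Pos_def by blast
  have "\<exists>\<sigma>::real. (\<sigma> = 1 \<or> \<sigma> = -1) \<and>
     (\<forall>x\<in>{-1<..<1}. \<forall>s>0. (\<sigma> = -1 \<longrightarrow> s < w x) \<longrightarrow> (x, w x + \<sigma> * s) \<in> Pos)"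
    by (rule sign_choice[OF wf(3) w_pos Op_open[folded Pos_def] PO Gam_eq[folded Pos_def] PG])
  then obtain \<sigma> :: real where sg: "\<sigma> = 1 \<or> \<sigma> = -1"
    and sprop: "\<forall>x\<in>{-1<..<1}. \<forall>s>0. (\<sigma> = -1 \<longrightarrow> s < w x) \<longrightarrow> (x, w x + \<sigma> * s) \<in> Pos"
    by blast
  have "\<exists>x\<in>{-1..1::real}. \<forall>y\<in>{-1..1}. w x \<le> w y"
    by (rule continuous_attains_inf) (auto intro: continuous_on_subset[OF wf(3)])
  then obtain x0 where x0: "x0 \<in> {-1..1}" "\<forall>y\<in>{-1..1}. w x0 \<le> w y" by blast
  define m where "m = w x0"
  have m: "m > 0" "\<forall>y\<in>{-1..1}. m \<le> w y" using x0 w_pos unfolding m_def by auto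
  define C where "C = 2 * (B + 1)"
  have C: "C > 0" using B unfolding C_def by simp
  define K where "K = sqrt (1 + B\<^sup>2)"
  have K: "K > 0" unfolding K_def by (simp add: add_pos_nonneg)
  define c where "c = Qmin\<^sup>2 / (C * K)"
  have c: "c > 0" unfolding c_def using C K Q_bounds(1) by simp
  have key: "ennreal (c / \<epsilon>) \<le> mu_eps w u Q \<epsilon>" if e: "0 < \<epsilon>" "C * \<epsilon> < m" for \<epsilon>
    unfolding mu_eps_def
  proof (rule INF_greatest, clarify)
    fix \<psi> v assume adm: "C1c_Gam w \<psi>" "L2sq_Gam w \<psi> = 1" "solves_aux w u Q \<epsilon> \<psi> v"
    define D where "D = Ueps w \<epsilon> \<inter> {p\<in>Omega. u p > 0}"
    have harm: "harmonic_on D v" using adm(3) unfolding solves_aux_def D_def Let_def by auto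
    have oD: "open D" and pyd: "py v differentiable_on D"
      using harm unfolding harmonic_on_def C2_on_def by auto
    define h where "h p = ennreal (indicator D p * (py v p)\<^sup>2)" for p
    have hm: "h \<in> borel_measurable (lborel \<Otimes>\<^sub>M lborel)" unfolding h_def
      by (rule meas_h[OF oD differentiable_imp_continuous_on[OF pyd]])
    define G where "G x = indicator {-1<..<1::real} x * ((\<psi> (x, w x))\<^sup>2 * sqrt (1 + (deriv w x)\<^sup>2))" for x
    have pw: "ennreal (c / \<epsilon>) * ennreal (G x) \<le> (\<integral>\<^sup>+y. h (x, y) \<partial>lborel)" for x
    proof (cases "x \<in> {-1<..<1}")
      case False then show ?thesis unfolding G_def by simp
    next
      case True
      have xO: "(x, w x) \<in> Omega" using True w_pos unfolding Omega_def by auto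
      have ib: "ennreal ((Q (x, w x) * \<psi> (x, w x))\<^sup>2 / (C * \<epsilon>)) \<le> (\<integral>\<^sup>+y. h (x, y) \<partial>lborel)"
        unfolding h_def D_def
      proof (rule inner_bound[OF adm(3) sg _ True e(1) C])
        show "\<forall>s>0. (\<sigma> = -1 \<longrightarrow> s < w x) \<longrightarrow> (x, w x + \<sigma> * s) \<in> {p\<in>Omega. u p > 0}"
          using sprop True unfolding Pos_def by blast
        show "s / C \<le> infdist (x, w x + \<sigma> * s) (Gam w)" if "0 \<le> s" for s
        proof -
          have "\<bar>\<sigma>\<bar> = 1" using sg by auto
          moreover have "x \<in> {-1..1}" using True by auto
          ultimately show ?thesis unfolding C_def using infdist_low[OF _ B(3)] B(1) that by simp
        qed
        show "C * \<epsilon> < w x"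
        proof -
          have "x \<in> {-1..1}" using True by auto
          then have "m \<le> w x" using m(2) by blast
          then show ?thesis using e(2) by linarith
        qed
      qed
      have sK: "sqrt (1 + (deriv w x)\<^sup>2) \<le> K"
      proof -
        have "x \<in> {-1..1}" using True by auto
        then have "\<bar>deriv w x\<bar> \<le> \<bar>B\<bar>" using B(1,2) by auto
        then have "(deriv w x)\<^sup>2 \<le> B\<^sup>2" by (simp add: abs_le_square_iff)
        then show ?thesis unfolding K_def by simp
      qed
      have Qm: "Qmin\<^sup>2 \<le> (Q (x, w x))\<^sup>2" using Q_bounds xO by (intro power_mono) auto
      have "c / \<epsilon> * G x = Qmin\<^sup>2 * (\<psi> (x, w x))\<^sup>2 * (sqrt (1 + (deriv w x)\<^sup>2) / K) / (C * \<epsilon>)"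
        unfolding c_def G_def using True by (simp add: ac_simps)
      also have "\<dots> \<le> Qmin\<^sup>2 * (\<psi> (x, w x))\<^sup>2 * 1 / (C * \<epsilon>)"
        using sK K C e by (intro divide_right_mono mult_left_mono) auto
      also have "\<dots> \<le> (Q (x, w x) * \<psi> (x, w x))\<^sup>2 / (C * \<epsilon>)"
        using Qm C e by (intro divide_right_mono) (auto simp: power_mult_distrib intro: mult_right_mono)
      finally have "c / \<epsilon> * G x \<le> (Q (x, w x) * \<psi> (x, w x))\<^sup>2 / (C * \<epsilon>)" .
      then have "ennreal (c / \<epsilon>) * ennreal (G x) \<le> ennreal ((Q (x, w x) * \<psi> (x, w x))\<^sup>2 / (C * \<epsilon>))"
        using c e by (simp add: ennreal_mult'[symmetric] ennreal_leI)
      then show ?thesis using ib by (rule order_trans)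
    qed
    have "ennreal (c / \<epsilon>) = ennreal (c / \<epsilon>) * (\<integral>\<^sup>+x. ennreal (G x) \<partial>lborel)"
      using L2_int[OF adm(2)] unfolding G_def by simp
    also have "\<dots> = (\<integral>\<^sup>+x. ennreal (c / \<epsilon>) * ennreal (G x) \<partial>lborel)"
      unfolding G_def by (rule nn_integral_cmult[symmetric]) (rule L2_meas[OF adm(2)])
    also have "\<dots> \<le> (\<integral>\<^sup>+x. \<integral>\<^sup>+y. h (x, y) \<partial>lborel \<partial>lborel)"
      by (intro nn_integral_mono pw)
    also have "\<dots> = integral\<^sup>N (lborel \<Otimes>\<^sub>M lborel) h"
      by (rule lborel.nn_integral_fst[OF hm])
    also have "\<dots> = integral\<^sup>N lborel h" by (simp add: lborel_prod)
    also have "\<dots> \<le> (\<integral>\<^sup>+p. ennreal (grad_sq v p) * indicator D p \<partial>lborel)"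
      unfolding h_def grad_sq_def
      by (intro nn_integral_mono) (auto simp: indicator_def intro!: ennreal_leI)
    also have "\<dots> = set_nn_integral lebesgue D (\<lambda>p. ennreal (grad_sq v p))"
      by (simp add: nn_integral_completion)
    finally show "ennreal (c / \<epsilon>) \<le> set_nn_integral lebesgue (Ueps w \<epsilon> \<inter> {p\<in>Omega. u p > 0})
          (\<lambda>p. ennreal (grad_sq (snd (\<psi>, v)) p))" unfolding D_def by simp
  qed
  show ?thesis
  proof (rule order_tendstoI)
    fix a :: ennreal assume "a < top"
    then obtain r where r: "a = ennreal r" "0 \<le> r" using ennreal_cases[of a] by auto
    define d where "d = min (m / C) (c / (r + 1))"
    have d: "d > 0" unfolding d_def using m C c r by simp
    show "\<forall>\<^sub>F \<epsilon> in at_right 0. a < mu_eps w u Q \<epsilon>"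
      unfolding eventually_at_right_field
    proof (intro exI[of _ d] conjI allI impI d)
      fix \<epsilon> :: real assume e: "0 < \<epsilon>" "\<epsilon> < d"
      have e1: "C * \<epsilon> < m" using e C unfolding d_def by (auto simp: field_simps)
      have "\<epsilon> < c / (r + 1)" using e unfolding d_def by simp
      then have "\<epsilon> * (r + 1) < c" using r by (simp add: field_simps)
      then have "r < c / \<epsilon>" using e r by (simp add: field_simps)
      then have "ennreal r < ennreal (c / \<epsilon>)" using r by (simp add: ennreal_lessI)
      then show "a < mu_eps w u Q \<epsilon>" using key[OF e(1) e1] r by simp
    qed
  next
    fix a :: ennreal assume "a > top" then show "\<forall>\<^sub>F \<epsilon> in at_right 0. mu_eps w u Q \<epsilon> < a" by simp
  qed
qed

end
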